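(* Consider the Online Submodular Bipartite Matching problem (defined in the context) with arbitrary arrival rates $r_v\in[0,1]$. Let $\mathbf{x}^*\in[0,1]^E$ be a feasible solution of the program: maximize $F(\mathbf{x})$ subject to $\sum_{e\in E(v)} x_e \le r_v$ for all $v\in V$, $\sum_{e\in E(u)} x_e\le 1$ for all $u\in U$, $0\le x_e\le 1$ for all $e\in E$, obtained by the continuous greedy algorithm so that $F(\mathbf{x}^* )\ge (1-1/e)\mathbb{E}[\mathrm{OPT}]$. Consider the online algorithm MMP-ALG: when $v$ arrives at time $t$, sample at most one edge $e\in E(v)$, each $e$ with probability $x^*_e/r_v$; if $e=(u,v)$ is sampled and $u$ is still available, match $e$, otherwise skip. Then MMP-ALG achieves a competitive ratio of at least $(1-1/e)^2$ when $|U|=o(\sqrt{T})$ and $T\to\infty$.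
   Context: Online Submodular Bipartite Matching (OSBM): we are given a bipartite graph $G=(U,V,E)$ with $m=|E|$, where $U$ are offline vertices and $V$ are online vertex types, a finite known horizon $T$, and a known probability distribution $\{p_v\}_{v\in V}$ with $\sum_{v} p_v \le 1$. In each round $t\in\{1,\dots,T\}$, independently across rounds, at most one vertex of $V$ arrives: $v$ arrives with probability $p_v$. Let $r_v = T p_v \in [0,1]$. When $v$ arrives, the algorithm must immediately and irrevocably either reject it or match it to a still available neighbor $u\in U$; each $u\in U$ has unit capacity. We have value-oracle access to a non-negative monotone submodular $f:2^E\to\mathbb{R}_{\ge0}$ with $f(\emptyset)=0$; the goal is to maximize $\mathbb{E}[f(\mathcal{M})]$ for the final set $\mathcal{M}$ of matched edges. $\mathbb{E}[\mathrm{OPT}]$ is the expectation over arrival sequences $S$ of the maximum of $f$ over feasible hindsight matchings for $S$; the competitive ratio of ALG is the minimum over instances of $\mathbb{E}[\mathrm{ALG}]/\mathbb{E}[\mathrm{OPT}]$. For $w\in U\cup V$, $E(w)$ is the set of edges incident to $w$. $F:[0,1]^E\to\mathbb{R}_{\ge0}$ is the multilinear extension of $f$: $F(\mathbf{x})=\sum_{S\subseteq E}\prod_{e\in S}x_e\prod_{e\notin S}(1-x_e) f(S)$, i.e. the expected value of $f$ on a random set containing each $e$ independently with probability $x_e$. *)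

theory Defs
  imports Complex_Main
begin

text \<open>Offline vertices U, online
vertex types V, edges E \<subseteq> U \<times> V (an edge is a pair (u,v)), horizon T,
arrival probabilities p, rates r_v = T p_v, objective f on sets of edges.\<close>

definition rate :: "('v \<Rightarrow> real) \<Rightarrow> nat \<Rightarrow> 'v \<Rightarrow> real" where
  "rate p T v = real T * p v"

definition submodular_on :: "'e set \<Rightarrow> ('e set \<Rightarrow> real) \<Rightarrow> bool" where
  "submodular_on E f \<longleftrightarrow>
     (\<forall>A B e. A \<subseteq> B \<and> B \<subseteq> E \<and> e \<in> E - B \<longrightarrow>
        f (insert e A) - f A \<ge> f (insert e B) - f B)"

definition monotone_on_sets :: "'e set \<Rightarrow> ('e set \<Rightarrow> real) \<Rightarrow> bool" where
  "monotone_on_sets E f \<longleftrightarrow> (\<forall>A B. A \<subseteq> B \<and> B \<subseteq> E \<longrightarrow> f A \<le> f B)"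

definition osbm_instance ::
  "'u set \<Rightarrow> 'v set \<Rightarrow> ('u \<times> 'v) set \<Rightarrow> ('v \<Rightarrow> real) \<Rightarrow> nat \<Rightarrow> (('u \<times> 'v) set \<Rightarrow> real) \<Rightarrow> bool" where
  "osbm_instance U V E p T f \<longleftrightarrow>
     finite U \<and> finite V \<and> E \<subseteq> U \<times> V \<and> T \<ge> 1 \<and>
     (\<forall>v\<in>V. 0 \<le> p v) \<and> sum p V \<le> 1 \<and> (\<forall>v\<in>V. rate p T v \<le> 1) \<and>
     f {} = 0 \<and> (\<forall>A. A \<subseteq> E \<longrightarrow> 0 \<le> f A) \<and>
     monotone_on_sets E f \<and> submodular_on E f"

definition seqs :: "'a set \<Rightarrow> nat \<Rightarrow> 'a list set" where
  "seqs A n = {xs. set xs \<subseteq> A \<and> length xs = n}"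

text \<open>Probability of the arrival outcome of one round (None = no arrival).\<close>
definition arr_prob :: "'v set \<Rightarrow> ('v \<Rightarrow> real) \<Rightarrow> 'v option \<Rightarrow> real" where
  "arr_prob V p a = (case a of None \<Rightarrow> 1 - sum p V | Some v \<Rightarrow> p v)"

definition hindsight_matching :: "('u \<times> 'v) set \<Rightarrow> 'v option list \<Rightarrow> ('u \<times> 'v) set \<Rightarrow> bool" where
  "hindsight_matching E S M \<longleftrightarrow>
     M \<subseteq> E \<and> (\<forall>u. card {e\<in>M. fst e = u} \<le> 1) \<and>
     (\<forall>v. card {e\<in>M. snd e = v} \<le> count_list S (Some v))"

definition opt_value :: "('u \<times> 'v) set \<Rightarrow> (('u \<times> 'v) set \<Rightarrow> real) \<Rightarrow> 'v option list \<Rightarrow> real" where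
  "opt_value E f S = Max (f ` {M. hindsight_matching E S M})"

definition expected_opt ::
  "'v set \<Rightarrow> ('u \<times> 'v) set \<Rightarrow> ('v \<Rightarrow> real) \<Rightarrow> nat \<Rightarrow> (('u \<times> 'v) set \<Rightarrow> real) \<Rightarrow> real" where
  "expected_opt V E p T f =
     (\<Sum>S \<in> seqs (insert None (Some ` V)) T.
        prod_list (map (arr_prob V p) S) * opt_value E f S)"

definition multilinear_ext :: "'e set \<Rightarrow> ('e set \<Rightarrow> real) \<Rightarrow> ('e \<Rightarrow> real) \<Rightarrow> real" where
  "multilinear_ext E f x =
     (\<Sum>S \<in> Pow E. (\<Prod>e\<in>S. x e) * (\<Prod>e\<in>E - S. 1 - x e) * f S)"

definition lp_feasible ::
  "'u set \<Rightarrow> 'v set \<Rightarrow> ('u \<times> 'v) set \<Rightarrow> ('v \<Rightarrow> real) \<Rightarrow> nat \<Rightarrow> (('u \<times> 'v) \<Rightarrow> real) \<Rightarrow> bool" where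
  "lp_feasible U V E p T x \<longleftrightarrow>
     (\<forall>e\<in>E. 0 \<le> x e \<and> x e \<le> 1) \<and>
     (\<forall>v\<in>V. (\<Sum>e\<in>{e\<in>E. snd e = v}. x e) \<le> rate p T v) \<and>
     (\<forall>u\<in>U. (\<Sum>e\<in>{e\<in>E. fst e = u}. x e) \<le> 1)"

text \<open>MMP-ALG. One round produces (arrival, sampled edge). The joint probability:
no arrival; arrival of v with no sampled edge; arrival of v and sampled edge e \<in> E(v)
with probability p_v * x_e / r_v.\<close>
definition round_outcomes :: "'v set \<Rightarrow> ('u \<times> 'v) set \<Rightarrow> ('v option \<times> ('u \<times> 'v) option) set" where
  "round_outcomes V E =
     insert (None, None) ((\<lambda>v. (Some v, None)) ` V \<union> (\<lambda>e. (Some (snd e), Some e)) ` E)"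

definition round_prob ::
  "'v set \<Rightarrow> ('u \<times> 'v) set \<Rightarrow> ('v \<Rightarrow> real) \<Rightarrow> nat \<Rightarrow> (('u \<times> 'v) \<Rightarrow> real)
     \<Rightarrow> ('v option \<times> ('u \<times> 'v) option) \<Rightarrow> real" where
  "round_prob V E p T x \<omega> =
     (case \<omega> of
        (None, None) \<Rightarrow> 1 - sum p V
      | (None, Some e) \<Rightarrow> 0
      | (Some v, None) \<Rightarrow> p v * (1 - (\<Sum>e\<in>{e\<in>E. snd e = v}. x e / rate p T v))
      | (Some v, Some e) \<Rightarrow> (if e \<in> E \<and> snd e = v then p v * (x e / rate p T v) else 0))"

definition alg_step :: "('v option \<times> ('u \<times> 'v) option) \<Rightarrow> ('u \<times> 'v) set \<Rightarrow> ('u \<times> 'v) set" where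
  "alg_step \<omega> M =
     (case \<omega> of
        (Some v, Some e) \<Rightarrow> (if \<exists>e'\<in>M. fst e' = fst e then M else insert e M)
      | _ \<Rightarrow> M)"

definition alg_run :: "('v option \<times> ('u \<times> 'v) option) list \<Rightarrow> ('u \<times> 'v) set" where
  "alg_run \<omega>s = fold alg_step \<omega>s {}"

definition expected_alg ::
  "'v set \<Rightarrow> ('u \<times> 'v) set \<Rightarrow> ('v \<Rightarrow> real) \<Rightarrow> nat \<Rightarrow> (('u \<times> 'v) set \<Rightarrow> real)
     \<Rightarrow> (('u \<times> 'v) \<Rightarrow> real) \<Rightarrow> real" where
  "expected_alg V E p T f x =
     (\<Sum>\<omega>s \<in> seqs (round_outcomes V E) T.
        prod_list (map (round_prob V E p T x) \<omega>s) * f (alg_run \<omega>s))"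

end

theory Submission
  imports Defs
begin

definition mext :: "'e set \<Rightarrow> ('e \<Rightarrow> real) \<Rightarrow> ('e set \<Rightarrow> real) \<Rightarrow> real" where
  "mext D x h = (\<Sum>S\<in>Pow D. (\<Prod>e\<in>S. x e) * (\<Prod>e\<in>D - S. 1 - x e) * h S)"

lemma mext_empty: "mext {} x h = h {}"
  by (simp add: mext_def)

lemma mext_insert:
  assumes fin: "finite D" and a: "a \<notin> D"
  shows "mext (insert a D) x h = x a * mext D x (\<lambda>S. h (insert a S)) + (1 - x a) * mext D x h"
proof -
  have disj: "Pow D \<inter> insert a ` Pow D = {}" using a by auto
  have inj: "inj_on (insert a) (Pow D)"
  proof (rule inj_onI)
    fix S1 S2 assume "S1 \<in> Pow D" "S2 \<in> Pow D" "insert a S1 = insert a S2"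
    then show "S1 = S2" using a by (metis PowD insert_ident subsetD)
  qed
  have fP: "finite (Pow D)" using fin by simp
  have "mext (insert a D) x h = (\<Sum>S\<in>Pow D. (\<Prod>e\<in>S. x e) * (\<Prod>e\<in>insert a D - S. 1 - x e) * h S)
      + (\<Sum>S\<in>insert a ` Pow D. (\<Prod>e\<in>S. x e) * (\<Prod>e\<in>insert a D - S. 1 - x e) * h S)"
    unfolding mext_def Pow_insert using disj fP by (simp add: sum.union_disjoint)
  also have "(\<Sum>S\<in>insert a ` Pow D. (\<Prod>e\<in>S. x e) * (\<Prod>e\<in>insert a D - S. 1 - x e) * h S)
     = (\<Sum>S\<in>Pow D. (\<Prod>e\<in>insert a S. x e) * (\<Prod>e\<in>insert a D - insert a S. 1 - x e) * h (insert a S))"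
    using inj by (simp add: sum.reindex)
  also have "\<dots> = x a * mext D x (\<lambda>S. h (insert a S))"
    unfolding mext_def sum_distrib_left
  proof (rule sum.cong[OF refl])
    fix S assume S: "S \<in> Pow D"
    then have "finite S" using fin finite_subset by auto
    moreover have "a \<notin> S" using S a by auto
    moreover have "insert a D - insert a S = D - S" using a by auto
    ultimately show "(\<Prod>e\<in>insert a S. x e) * (\<Prod>e\<in>insert a D - insert a S. 1 - x e) * h (insert a S)
       = x a * ((\<Prod>e\<in>S. x e) * (\<Prod>e\<in>D - S. 1 - x e) * h (insert a S))" by simp
  qed
  also have "(\<Sum>S\<in>Pow D. (\<Prod>e\<in>S. x e) * (\<Prod>e\<in>insert a D - S. 1 - x e) * h S) = (1 - x a) * mext D x h"
    unfolding mext_def sum_distrib_left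
  proof (rule sum.cong[OF refl])
    fix S assume S: "S \<in> Pow D"
    have "insert a D - S = insert a (D - S)" using S a by auto
    moreover have "finite (D - S)" using fin by simp
    moreover have "a \<notin> D - S" using a by simp
    ultimately show "(\<Prod>e\<in>S. x e) * (\<Prod>e\<in>insert a D - S. 1 - x e) * h S
       = (1 - x a) * ((\<Prod>e\<in>S. x e) * (\<Prod>e\<in>D - S. 1 - x e) * h S)" by simp
  qed
  finally show ?thesis by simp
qed

lemma mext_mono:
  assumes "\<forall>e\<in>D. 0 \<le> x e \<and> x e \<le> 1" and "\<And>S. S \<subseteq> D \<Longrightarrow> h S \<le> k S"
  shows "mext D x h \<le> mext D x k"
  unfolding mext_def
proof (rule sum_mono)
  fix S assume S: "S \<in> Pow D"
  have "0 \<le> (\<Prod>e\<in>S. x e) * (\<Prod>e\<in>D - S. 1 - x e)"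
    using assms(1) S by (intro mult_nonneg_nonneg prod_nonneg) auto
  then show "(\<Prod>e\<in>S. x e) * (\<Prod>e\<in>D - S. 1 - x e) * h S \<le> (\<Prod>e\<in>S. x e) * (\<Prod>e\<in>D - S. 1 - x e) * k S"
    using assms(2) S by (simp add: mult_left_mono)
qed

lemma mext_add: "mext D x (\<lambda>S. h S + k S) = mext D x h + mext D x k"
  unfolding mext_def by (simp add: distrib_left sum.distrib)

lemma mext_cmult: "mext D x (\<lambda>S. c * h S) = c * mext D x h"
  unfolding mext_def by (simp add: sum_distrib_left mult_ac)

lemma mext_sum: "mext D x (\<lambda>S. \<Sum>i\<in>I. h i S) = (\<Sum>i\<in>I. mext D x (h i))"
  unfolding mext_def by (simp add: sum_distrib_left sum.swap[of _ I])

lemma mext_const: "finite D \<Longrightarrow> mext D x (\<lambda>_. c) = c"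
proof (induction D rule: finite_induct)
  case empty then show ?case by (simp add: mext_empty)
next
  case (insert a D) then show ?case by (simp add: mext_insert algebra_simps)
qed

lemma mext_lin: "finite D \<Longrightarrow> mext D x (\<lambda>S. \<Sum>e\<in>S. g e) = (\<Sum>e\<in>D. x e * g e)"
proof (induction D rule: finite_induct)
  case empty then show ?case by (simp add: mext_empty)
next
  case (insert a D)
  have "mext D x (\<lambda>S. \<Sum>e\<in>insert a S. g e) = mext D x (\<lambda>S. g a + (\<Sum>e\<in>S. g e))"
    unfolding mext_def
  proof (rule sum.cong[OF refl])
    fix S assume "S \<in> Pow D"
    then have "finite S" "a \<notin> S" using insert.hyps finite_subset by auto
    then show "(\<Prod>e\<in>S. x e) * (\<Prod>e\<in>D - S. 1 - x e) * (\<Sum>e\<in>insert a S. g e)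
       = (\<Prod>e\<in>S. x e) * (\<Prod>e\<in>D - S. 1 - x e) * (g a + (\<Sum>e\<in>S. g e))" by simp
  qed
  also have "\<dots> = g a + (\<Sum>e\<in>D. x e * g e)"
    using mext_add[of D x "\<lambda>_. g a" "\<lambda>S. \<Sum>e\<in>S. g e"] mext_const[OF insert.hyps(1)] insert.IH by simp
  finally show ?case using insert by (simp add: mext_insert algebra_simps)
qed

lemma mext_union:
  assumes "finite D1" "finite D2" "D1 \<inter> D2 = {}"
  shows "mext (D1 \<union> D2) x h = mext D1 x (\<lambda>S1. mext D2 x (\<lambda>S2. h (S1 \<union> S2)))"
  using assms
proof (induction D1 arbitrary: h rule: finite_induct)
  case empty then show ?case by (simp add: mext_empty)
next
  case (insert a D1)
  have "mext (insert a D1 \<union> D2) x h = mext (insert a (D1 \<union> D2)) x h" by simp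
  also have "\<dots> = x a * mext (D1 \<union> D2) x (\<lambda>S. h (insert a S)) + (1 - x a) * mext (D1 \<union> D2) x h"
    using insert by (intro mext_insert) auto
  also have "\<dots> = x a * mext D1 x (\<lambda>S1. mext D2 x (\<lambda>S2. h (insert a S1 \<union> S2)))
      + (1 - x a) * mext D1 x (\<lambda>S1. mext D2 x (\<lambda>S2. h (S1 \<union> S2)))"
    using insert by simp
  also have "\<dots> = mext (insert a D1) x (\<lambda>S1. mext D2 x (\<lambda>S2. h (S1 \<union> S2)))"
    using insert by (simp add: mext_insert)
  finally show ?case .
qed


definition Ef :: "('a \<times> 'b) set \<Rightarrow> ('a \<times> 'b) set \<Rightarrow> ('a \<times> 'b) set" where
  "Ef E A = {e\<in>E. \<forall>e'\<in>A. fst e' \<noteq> fst e}"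

definition Phi :: "('a \<times> 'b) set \<Rightarrow> (('a \<times> 'b) set \<Rightarrow> real) \<Rightarrow> ('a \<times> 'b \<Rightarrow> real) \<Rightarrow> ('a \<times> 'b) set \<Rightarrow> real" where
  "Phi E f x A = mext (Ef E A) x (\<lambda>S. f (A \<union> S))"

context
  fixes E :: "('a \<times> 'b) set" and f :: "('a \<times> 'b) set \<Rightarrow> real" and x :: "('a \<times> 'b) \<Rightarrow> real"
  assumes finE: "finite E" and subm: "submodular_on E f" and mono: "monotone_on_sets E f"
    and x01: "\<forall>e\<in>E. 0 \<le> x e \<and> x e \<le> 1"
begin

lemma sub_bound:
  assumes C: "C \<subseteq> E" and S: "finite S" "S \<subseteq> E"
  shows "f (C \<union> S) \<le> f C + (\<Sum>e\<in>S. f (insert e C) - f C)"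
  using S
proof (induction S rule: finite_induct)
  case empty then show ?case by simp
next
  case (insert a S)
  show ?case
  proof (cases "a \<in> C")
    case True
    then have "C \<union> insert a S = C \<union> S" "insert a C = C" by auto
    then show ?thesis using insert by simp
  next
    case False
    have "f (insert a (C \<union> S)) - f (C \<union> S) \<le> f (insert a C) - f C"
      using subm False insert C unfolding submodular_on_def by (meson Diff_iff Un_iff Un_least Un_upper1 insert_subset)
    then show ?thesis using insert by simp
  qed
qed

lemma claim1:
  assumes C: "C \<subseteq> E" and D: "D \<subseteq> E"
  shows "mext D x (\<lambda>S. f (C \<union> S)) \<le> f C + (\<Sum>e\<in>D. x e * (f (insert e C) - f C))"
proof -
  have fD: "finite D" using D finE finite_subset by auto
  have "mext D x (\<lambda>S. f (C \<union> S)) \<le> mext D x (\<lambda>S. f C + (\<Sum>e\<in>S. f (insert e C) - f C))"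
    using x01 D fD by (intro mext_mono sub_bound[OF C]) (auto intro: finite_subset)
  also have "\<dots> = f C + (\<Sum>e\<in>D. x e * (f (insert e C) - f C))"
    using fD by (simp add: mext_add mext_const mext_lin)
  finally show ?thesis .
qed

lemma marg_nonneg: "C \<subseteq> E \<Longrightarrow> e \<in> E \<Longrightarrow> 0 \<le> f (insert e C) - f C"
  using mono unfolding monotone_on_sets_def by (metis diff_ge_0_iff_ge insert_subset subset_insertI)


lemma phi_step:
  assumes A: "A \<subseteq> E" and xu1: "\<forall>u. (\<Sum>e\<in>{e\<in>E. fst e = u}. x e) \<le> 1"
  shows "0 \<le> (\<Sum>e\<in>Ef E A. x e * (Phi E f x (insert e A) - Phi E f x A))"
proof -
  define D where "D = Ef E A"
  have DE: "D \<subseteq> E" unfolding D_def Ef_def by auto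
  have fD: "finite D" using DE finE finite_subset by auto
  have inner: "0 \<le> (\<Sum>e\<in>{e\<in>D. fst e = u}. x e * (Phi E f x (insert e A) - Phi E f x A))" for u
  proof -
    define Du where "Du = {e\<in>D. fst e = u}"
    define D' where "D' = {e\<in>D. fst e \<noteq> u}"
    have fDu: "finite Du" "finite D'" using fD unfolding Du_def D'_def by auto
    have DuE: "Du \<subseteq> E" "D' \<subseteq> E" using DE unfolding Du_def D'_def by auto
    define xu where "xu = (\<Sum>e\<in>Du. x e)"
    have xu0: "0 \<le> xu" unfolding xu_def using DuE x01 by (intro sum_nonneg) auto
    have "xu \<le> (\<Sum>e\<in>{e\<in>E. fst e = u}. x e)"
      unfolding xu_def using DuE x01 finE by (intro sum_mono2) (auto simp: Du_def)
    then have xu1': "xu \<le> 1" using xu1 by (meson order_trans)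
    have EfI: "Ef E (insert e A) = D'" if "e \<in> Du" for e
      using that unfolding Ef_def D'_def Du_def D_def by auto
    have PhiA: "Phi E f x A = mext D' x (\<lambda>S'. mext Du x (\<lambda>S''. f ((A \<union> S') \<union> S'')))"
    proof -
      have "D = D' \<union> Du" "D' \<inter> Du = {}" unfolding D'_def Du_def by auto
      then have "Phi E f x A = mext (D' \<union> Du) x (\<lambda>S. f (A \<union> S))" unfolding Phi_def D_def by simp
      also have "\<dots> = mext D' x (\<lambda>S'. mext Du x (\<lambda>S''. f (A \<union> (S' \<union> S''))))"
        by (rule mext_union[OF fDu(2) fDu(1) \<open>D' \<inter> Du = {}\<close>])
      finally show ?thesis by (simp add: Un_assoc)
    qed
    have PhiI: "Phi E f x (insert e A) = mext D' x (\<lambda>S'. f (insert e (A \<union> S')))" if "e \<in> Du" for e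
      unfolding Phi_def EfI[OF that] by simp
    have "(\<Sum>e\<in>Du. x e * (Phi E f x (insert e A) - Phi E f x A))
        = (\<Sum>e\<in>Du. x e * Phi E f x (insert e A)) - xu * Phi E f x A"
      unfolding xu_def by (simp add: right_diff_distrib sum_subtractf sum_distrib_right)
    also have "\<dots> = mext D' x (\<lambda>S'. (\<Sum>e\<in>Du. x e * f (insert e (A \<union> S'))))
        + mext D' x (\<lambda>S'. (- xu) * mext Du x (\<lambda>S''. f ((A \<union> S') \<union> S'')))"
      using mext_cmult[of D' x "- xu" "\<lambda>S'. mext Du x (\<lambda>S''. f ((A \<union> S') \<union> S''))"]
      by (simp add: PhiI PhiA mext_sum mext_cmult)
    also have "\<dots> = mext D' x (\<lambda>S'. (\<Sum>e\<in>Du. x e * f (insert e (A \<union> S')))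
        + (- xu) * mext Du x (\<lambda>S''. f ((A \<union> S') \<union> S'')))"
      by (rule mext_add[symmetric])
    also have "\<dots> \<ge> mext D' x (\<lambda>_. 0)"
    proof (rule mext_mono)
      show "\<forall>e\<in>D'. 0 \<le> x e \<and> x e \<le> 1" using x01 DuE by auto
      fix S' assume S': "S' \<subseteq> D'"
      define C where "C = A \<union> S'"
      have CE: "C \<subseteq> E" using A S' DuE unfolding C_def by auto
      have c1: "mext Du x (\<lambda>S''. f (C \<union> S'')) \<le> f C + (\<Sum>e\<in>Du. x e * (f (insert e C) - f C))"
        using claim1[OF CE DuE(1)] .
      have s0: "0 \<le> (\<Sum>e\<in>Du. x e * (f (insert e C) - f C))"
        using x01 DuE CE by (intro sum_nonneg mult_nonneg_nonneg marg_nonneg) auto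
      have "xu * mext Du x (\<lambda>S''. f (C \<union> S'')) \<le> xu * (f C + (\<Sum>e\<in>Du. x e * (f (insert e C) - f C)))"
        using c1 xu0 by (rule mult_left_mono)
      also have "\<dots> \<le> xu * f C + (\<Sum>e\<in>Du. x e * (f (insert e C) - f C))"
        using xu1' s0 xu0 by (simp add: distrib_left mult_left_le_one_le)
      also have "\<dots> = (\<Sum>e\<in>Du. x e * f (insert e C))"
        unfolding xu_def by (simp add: sum_distrib_right right_diff_distrib sum_subtractf)
      finally show "0 \<le> (\<Sum>e\<in>Du. x e * f (insert e (A \<union> S'))) + - xu * mext Du x (\<lambda>S''. f (A \<union> S' \<union> S''))"
        unfolding C_def by simp
    qed
    finally show ?thesis using mext_const[OF fDu(2)] unfolding Du_def by simp
  qed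
  have "(\<Sum>e\<in>D. x e * (Phi E f x (insert e A) - Phi E f x A))
      = (\<Sum>u\<in>fst ` D. \<Sum>e\<in>{e\<in>D. fst e = u}. x e * (Phi E f x (insert e A) - Phi E f x A))"
    using fD by (simp add: sum.group)
  also have "\<dots> \<ge> 0" by (rule sum_nonneg) (rule inner)
  finally show ?thesis unfolding D_def .
qed

lemma Phi_bound: "A \<subseteq> E \<Longrightarrow> Phi E f x A \<le> f A + (\<Sum>e\<in>Ef E A. x e * (f (insert e A) - f A))"
  unfolding Phi_def by (rule claim1) (auto simp: Ef_def)


end

definition W :: "('b option \<times> ('a \<times> 'b) option) set \<Rightarrow> (('b option \<times> ('a \<times> 'b) option) \<Rightarrow> real) \<Rightarrow> nat \<Rightarrow> (('a \<times> 'b) set \<Rightarrow> real) \<Rightarrow> ('a \<times> 'b) set \<Rightarrow> real" where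
  "W Om Pr k g A = (\<Sum>ws\<in>seqs Om k. prod_list (map Pr ws) * g (fold alg_step ws A))"

lemma seqs_0: "seqs Om 0 = {[]}" by (auto simp: seqs_def)

lemma seqs_Suc: "seqs Om (Suc k) = (\<lambda>(w, ws). w # ws) ` (Om \<times> seqs Om k)"
  by (auto simp: seqs_def length_Suc_conv image_iff)

lemma W_0: "W Om Pr 0 g A = g A" by (simp add: W_def seqs_0)

lemma W_Suc: "W Om Pr (Suc k) g A = (\<Sum>w\<in>Om. Pr w * W Om Pr k g (alg_step w A))"
proof -
  have inj: "inj_on (\<lambda>(w, ws). w # ws) (Om \<times> seqs Om k)" by (auto intro: inj_onI)
  have "W Om Pr (Suc k) g A = (\<Sum>(w, ws)\<in>Om \<times> seqs Om k. Pr w * (prod_list (map Pr ws) * g (fold alg_step ws (alg_step w A))))"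
    unfolding W_def seqs_Suc by (subst sum.reindex[OF inj]) (simp add: case_prod_beta mult_ac)
  also have "\<dots> = (\<Sum>w\<in>Om. \<Sum>ws\<in>seqs Om k. Pr w * (prod_list (map Pr ws) * g (fold alg_step ws (alg_step w A))))"
    by (rule sum.cartesian_product[symmetric])
  also have "\<dots> = (\<Sum>w\<in>Om. Pr w * W Om Pr k g (alg_step w A))"
    unfolding W_def by (simp add: sum_distrib_left)
  finally show ?thesis .
qed

context
  fixes U :: "'u set" and V :: "'v set" and E p T f x
  assumes inst: "osbm_instance U V E p T f" and feas: "lp_feasible U V E p T x"
begin

abbreviation "\<Omega> \<equiv> round_outcomes V E"
abbreviation "P \<equiv> round_prob V E p T x"

lemma finU: "finite U" and finV: "finite V" and EUV: "E \<subseteq> U \<times> V" and T1: "T \<ge> 1"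
  and pnn: "\<forall>v\<in>V. 0 \<le> p v" and psum: "sum p V \<le> 1"
  and fnn: "\<And>A. A \<subseteq> E \<Longrightarrow> 0 \<le> f A" and f0: "f {} = 0"
  and subm: "submodular_on E f" and mono: "monotone_on_sets E f"
  using inst unfolding osbm_instance_def by auto

lemma finE: "finite E" using EUV finU finV finite_subset by blast

lemma x01: "\<forall>e\<in>E. 0 \<le> x e \<and> x e \<le> 1" using feas unfolding lp_feasible_def by auto

lemma xv: "v \<in> V \<Longrightarrow> (\<Sum>e\<in>{e\<in>E. snd e = v}. x e) \<le> rate p T v"
  using feas unfolding lp_feasible_def by auto

lemma xu1: "\<forall>u. (\<Sum>e\<in>{e\<in>E. fst e = u}. x e) \<le> 1"
proof
  fix u
  show "(\<Sum>e\<in>{e\<in>E. fst e = u}. x e) \<le> 1"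
  proof (cases "u \<in> U")
    case True then show ?thesis using feas unfolding lp_feasible_def by auto
  next
    case False
    then have "{e\<in>E. fst e = u} = {}" using EUV by auto
    then show ?thesis by (simp only: sum.empty)
  qed
qed

lemma x_zero: "e \<in> E \<Longrightarrow> p (snd e) = 0 \<Longrightarrow> x e = 0"
proof -
  assume e: "e \<in> E" and p0: "p (snd e) = 0"
  have v: "snd e \<in> V" using e EUV by auto
  have "(\<Sum>e'\<in>{e'\<in>E. snd e' = snd e}. x e') \<le> 0" using xv[OF v] p0 by (simp add: rate_def)
  moreover have "x e \<le> (\<Sum>e'\<in>{e'\<in>E. snd e' = snd e}. x e')"
    using e x01 finE by (intro member_le_sum) auto
  ultimately show "x e = 0" using x01 e by force
qed

lemma P_edge: "e \<in> E \<Longrightarrow> p (snd e) * (x e / rate p T (snd e)) = x e / T"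
  using x_zero[of e] by (cases "p (snd e) = 0") (auto simp: rate_def)

lemma Pe: "e \<in> E \<Longrightarrow> P (Some (snd e), Some e) = x e / T"
  using P_edge by (simp add: round_prob_def)

lemma sum_Omega:
  assumes h0: "h (None, None) = 0" and h1: "\<And>v. h (Some v, None) = 0"
  shows "(\<Sum>\<omega>\<in>\<Omega>. h \<omega>) = (\<Sum>e\<in>E. h (Some (snd e), Some e))"
proof -
  let ?A1 = "(\<lambda>v. (Some v, None)) ` V" and ?A2 = "(\<lambda>e. (Some (snd e), Some e)) ` E"
  have fin: "finite ?A1" "finite ?A2" using finV finE by auto
  have "(\<Sum>\<omega>\<in>\<Omega>. h \<omega>) = (\<Sum>\<omega>\<in>?A1 \<union> ?A2. h \<omega>)"
    unfolding round_outcomes_def using fin h0 by (subst sum.insert) auto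
  also have "\<dots> = (\<Sum>\<omega>\<in>?A1. h \<omega>) + (\<Sum>\<omega>\<in>?A2. h \<omega>)"
    using fin by (intro sum.union_disjoint) auto
  also have "(\<Sum>\<omega>\<in>?A1. h \<omega>) = 0" using h1 by (intro sum.neutral) auto
  also have "(\<Sum>\<omega>\<in>?A2. h \<omega>) = (\<Sum>e\<in>E. h (Some (snd e), Some e))"
    by (subst sum.reindex) (auto intro: inj_onI)
  finally show ?thesis by simp
qed

lemma P_nonneg: "\<omega> \<in> \<Omega> \<Longrightarrow> 0 \<le> P \<omega>"
proof -
  assume w: "\<omega> \<in> \<Omega>"
  show "0 \<le> P \<omega>"
  proof -
    { assume "\<omega> = (None, None)" then have ?thesis using psum by (simp add: round_prob_def) }
    moreover
    { fix v assume wv: "\<omega> = (Some v, None)" "v \<in> V"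
      have "(\<Sum>e\<in>{e\<in>E. snd e = v}. x e / rate p T v) \<le> 1"
      proof (cases "rate p T v = 0")
        case True then show ?thesis by simp
      next
        case False
        then have "0 < rate p T v" using pnn wv T1 by (auto simp: rate_def)
        then show ?thesis using xv[OF wv(2)] by (simp add: sum_divide_distrib[symmetric])
      qed
      then have ?thesis using wv pnn by (simp add: round_prob_def) }
    moreover
    { fix e assume "\<omega> = (Some (snd e), Some e)" "e \<in> E"
      then have ?thesis using Pe x01 by auto }
    ultimately show ?thesis using w unfolding round_outcomes_def by blast
  qed
qed

lemma P_sum: "(\<Sum>\<omega>\<in>\<Omega>. P \<omega>) = 1"
proof -
  let ?A1 = "(\<lambda>v. (Some v, None)) ` V" and ?A2 = "(\<lambda>e. (Some (snd e), Some e)) ` E"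
  have fin: "finite ?A1" "finite ?A2" using finV finE by auto
  have "(\<Sum>\<omega>\<in>\<Omega>. P \<omega>) = P (None, None) + (\<Sum>\<omega>\<in>?A1 \<union> ?A2. P \<omega>)"
    unfolding round_outcomes_def using fin by (subst sum.insert) auto
  also have "(\<Sum>\<omega>\<in>?A1 \<union> ?A2. P \<omega>) = (\<Sum>\<omega>\<in>?A1. P \<omega>) + (\<Sum>\<omega>\<in>?A2. P \<omega>)"
    using fin by (intro sum.union_disjoint) auto
  also have "(\<Sum>\<omega>\<in>?A2. P \<omega>) = (\<Sum>e\<in>E. x e / T)"
    by (subst sum.reindex) (auto intro: inj_onI simp: Pe)
  also have "(\<Sum>\<omega>\<in>?A1. P \<omega>) = (\<Sum>v\<in>V. p v * (1 - (\<Sum>e\<in>{e\<in>E. snd e = v}. x e / rate p T v)))"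
    by (subst sum.reindex) (auto intro: inj_onI simp: round_prob_def)
  also have "\<dots> = sum p V - (\<Sum>v\<in>V. \<Sum>e\<in>{e\<in>E. snd e = v}. p (snd e) * (x e / rate p T (snd e)))"
    by (simp add: right_diff_distrib sum_subtractf sum_distrib_left)
  also have "(\<Sum>v\<in>V. \<Sum>e\<in>{e\<in>E. snd e = v}. p (snd e) * (x e / rate p T (snd e)))
      = (\<Sum>e\<in>E. p (snd e) * (x e / rate p T (snd e)))"
    using finE finV EUV by (intro sum.group) auto
  also have "\<dots> = (\<Sum>e\<in>E. x e / T)" by (rule sum.cong[OF refl]) (rule P_edge)
  finally show ?thesis by (simp add: round_prob_def)
qed

lemma step_E: "\<omega> \<in> \<Omega> \<Longrightarrow> A \<subseteq> E \<Longrightarrow> alg_step \<omega> A \<subseteq> E"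
  unfolding round_outcomes_def alg_step_def by (auto split: if_splits)

lemma L0:
  assumes A: "A \<subseteq> E"
  shows "(\<Sum>\<omega>\<in>\<Omega>. P \<omega> * g (alg_step \<omega> A))
     = g A + (\<Sum>e\<in>Ef E A. (x e / T) * (g (insert e A) - g A))"
proof -
  have "(\<Sum>\<omega>\<in>\<Omega>. P \<omega> * g (alg_step \<omega> A))
      = (\<Sum>\<omega>\<in>\<Omega>. P \<omega> * g A) + (\<Sum>\<omega>\<in>\<Omega>. P \<omega> * (g (alg_step \<omega> A) - g A))"
    by (simp add: sum.distrib[symmetric] algebra_simps)
  also have "(\<Sum>\<omega>\<in>\<Omega>. P \<omega> * g A) = g A" using P_sum by (simp add: sum_distrib_right[symmetric])
  also have "(\<Sum>\<omega>\<in>\<Omega>. P \<omega> * (g (alg_step \<omega> A) - g A))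
      = (\<Sum>e\<in>E. P (Some (snd e), Some e) * (g (alg_step (Some (snd e), Some e) A) - g A))"
    by (rule sum_Omega) (auto simp: alg_step_def)
  also have "\<dots> = (\<Sum>e\<in>E. if e \<in> Ef E A then (x e / T) * (g (insert e A) - g A) else 0)"
  proof (rule sum.cong[OF refl])
    fix e assume e: "e \<in> E"
    show "P (Some (snd e), Some e) * (g (alg_step (Some (snd e), Some e) A) - g A)
       = (if e \<in> Ef E A then (x e / T) * (g (insert e A) - g A) else 0)"
    proof (cases "e \<in> Ef E A")
      case True
      then have "\<not> (\<exists>e'\<in>A. fst e' = fst e)" by (auto simp: Ef_def)
      then show ?thesis using True e by (simp add: Pe alg_step_def)
    next
      case False
      then have "\<exists>e'\<in>A. fst e' = fst e" using e by (auto simp: Ef_def)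
      then show ?thesis using False e by (simp add: alg_step_def)
    qed
  qed
  also have "\<dots> = (\<Sum>e\<in>Ef E A. (x e / T) * (g (insert e A) - g A))"
  proof -
    have "{e\<in>E. e \<in> Ef E A} = Ef E A" by (auto simp: Ef_def)
    then show ?thesis
      using sum.inter_filter[OF finE, of "\<lambda>e. (x e / T) * (g (insert e A) - g A)" "\<lambda>e. e \<in> Ef E A"]
      by simp
  qed
  finally show ?thesis .
qed

lemma main_ind:
  assumes A: "A \<subseteq> E"
  shows "W \<Omega> P k f A \<ge> (1 - 1 / T) ^ k * f A + (1 - (1 - 1 / T) ^ k) * Phi E f x A"
  using A
proof (induction k arbitrary: A)
  case 0 then show ?case by (simp add: W_0)
next
  case (Suc k)
  let ?c = "1 - 1 / real T"
  have c0: "0 \<le> ?c" "?c \<le> 1" using T1 by auto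
  have ck: "0 \<le> ?c ^ k" "?c ^ k \<le> 1" using c0 by (auto intro: power_le_one)
  let ?a = "(\<Sum>w\<in>\<Omega>. P w * f (alg_step w A))"
  let ?b = "(\<Sum>w\<in>\<Omega>. P w * Phi E f x (alg_step w A))"
  have "W \<Omega> P (Suc k) f A = (\<Sum>w\<in>\<Omega>. P w * W \<Omega> P k f (alg_step w A))" by (rule W_Suc)
  also have "\<dots> \<ge> (\<Sum>w\<in>\<Omega>. P w * (?c ^ k * f (alg_step w A) + (1 - ?c ^ k) * Phi E f x (alg_step w A)))"
    using Suc step_E P_nonneg by (intro sum_mono mult_left_mono) auto
  finally have 1: "W \<Omega> P (Suc k) f A \<ge> ?c ^ k * ?a + (1 - ?c ^ k) * ?b"
    by (simp add: distrib_left sum.distrib sum_distrib_left mult_ac)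
  have "?b = Phi E f x A + (\<Sum>e\<in>Ef E A. (x e / T) * (Phi E f x (insert e A) - Phi E f x A))"
    by (rule L0[OF Suc.prems])
  also have "(\<Sum>e\<in>Ef E A. (x e / T) * (Phi E f x (insert e A) - Phi E f x A))
     = (\<Sum>e\<in>Ef E A. x e * (Phi E f x (insert e A) - Phi E f x A)) / T"
    by (simp add: sum_divide_distrib)
  finally have b: "?b \<ge> Phi E f x A"
    using phi_step[OF finE subm mono x01 Suc.prems xu1] T1 by simp
  have "?a = f A + (\<Sum>e\<in>Ef E A. (x e / T) * (f (insert e A) - f A))"
    by (rule L0[OF Suc.prems])
  also have "(\<Sum>e\<in>Ef E A. (x e / T) * (f (insert e A) - f A))
     = (\<Sum>e\<in>Ef E A. x e * (f (insert e A) - f A)) / T"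
    by (simp add: sum_divide_distrib)
  finally have a: "?a \<ge> f A + (Phi E f x A - f A) / T"
    using Phi_bound[OF finE subm mono x01 Suc.prems] T1 by (simp add: divide_right_mono)
  have "?c ^ k * ?a + (1 - ?c ^ k) * ?b \<ge> ?c ^ k * (f A + (Phi E f x A - f A) / T) + (1 - ?c ^ k) * Phi E f x A"
    using a b ck by (intro add_mono mult_left_mono) auto
  also have "?c ^ k * (f A + (Phi E f x A - f A) / T) + (1 - ?c ^ k) * Phi E f x A
     = ?c ^ Suc k * f A + (1 - ?c ^ Suc k) * Phi E f x A"
    using T1 by (simp add: field_simps)
  finally show ?case using 1 by linarith
qed

lemma alg_eq: "expected_alg V E p T f x = W \<Omega> P T f {}"
  unfolding expected_alg_def W_def alg_run_def by simp

lemma F_eq: "Phi E f x {} = multilinear_ext E f x"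
  unfolding Phi_def Ef_def mext_def multilinear_ext_def by simp

lemma alg_bound: "expected_alg V E p T f x \<ge> (1 - (1 - 1 / T) ^ T) * multilinear_ext E f x"
  using main_ind[of "{}" T] by (simp add: alg_eq F_eq f0)

lemma opt_nonneg: "0 \<le> expected_opt V E p T f"
  unfolding expected_opt_def
proof (rule sum_nonneg)
  fix S assume S: "S \<in> seqs (insert None (Some ` V)) T"
  have "0 \<le> prod_list (map (arr_prob V p) S)"
  proof (rule prod_list_nonneg)
    fix a assume "a \<in> set (map (arr_prob V p) S)"
    then obtain b where b: "b \<in> set S" "a = arr_prob V p b" by auto
    then have "b \<in> insert None (Some ` V)" using S by (auto simp: seqs_def)
    then show "0 \<le> a" using b psum pnn by (auto simp: arr_prob_def)
  qed
  moreover have "0 \<le> opt_value E f S"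
  proof -
    have hm: "hindsight_matching E S {}" by (simp add: hindsight_matching_def)
    have "{M. hindsight_matching E S M} \<subseteq> Pow E" by (auto simp: hindsight_matching_def)
    then have "finite {M. hindsight_matching E S M}" using finE finite_subset by blast
    then have "f {} \<le> opt_value E f S" unfolding opt_value_def using hm by (intro Max_ge) auto
    then show ?thesis using f0 by simp
  qed
  ultimately show "0 \<le> prod_list (map (arr_prob V p) S) * opt_value E f S" by simp
qed

end

lemma pow_bound: "(1 :: nat) \<le> T \<Longrightarrow> (1 - 1 / real T) ^ T \<le> exp (-1)"
proof -
  assume T: "1 \<le> T"
  have "1 - 1 / real T \<le> exp (- 1 / real T)" using exp_ge_add_one_self[of "- 1 / real T"] by simp
  moreover have "0 \<le> 1 - 1 / real T" using T by simp
  ultimately have "(1 - 1 / real T) ^ T \<le> exp (- 1 / real T) ^ T" by (rule power_mono)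
  also have "\<dots> = exp (real T * (- 1 / real T))" by (rule exp_of_nat_mult[symmetric])
  also have "\<dots> = exp (-1)" using T by simp
  finally show ?thesis .
qed

lemma main_thm:
  fixes U :: "'u set" and V :: "'v set"
  assumes eps: "\<epsilon> > 0" and inst: "osbm_instance U V E p T f" and feas: "lp_feasible U V E p T x"
    and Fge: "multilinear_ext E f x \<ge> (1 - exp (-1)) * expected_opt V E p T f"
  shows "expected_alg V E p T f x \<ge> ((1 - exp (-1))^2 - \<epsilon>) * expected_opt V E p T f"
proof -
    have T1: "1 \<le> T" using inst unfolding osbm_instance_def by auto
    have O0: "0 \<le> expected_opt V E p T f" by (rule opt_nonneg[OF inst feas])
    have e1: "exp (-1 :: real) \<le> 1" by simp
    have c0: "0 \<le> 1 - exp (-1 :: real)" using e1 by simp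
    have F0: "0 \<le> multilinear_ext E f x" using Fge O0 c0 by (meson mult_nonneg_nonneg order_trans)
    have "expected_alg V E p T f x \<ge> (1 - (1 - 1 / T) ^ T) * multilinear_ext E f x"
      by (rule alg_bound[OF inst feas])
    moreover have "(1 - (1 - 1 / T) ^ T) * multilinear_ext E f x \<ge> (1 - exp (-1)) * multilinear_ext E f x"
      using pow_bound[OF T1] F0 by (intro mult_right_mono) auto
    moreover have "(1 - exp (-1)) * multilinear_ext E f x \<ge> (1 - exp (-1)) * ((1 - exp (-1)) * expected_opt V E p T f)"
      using Fge c0 by (rule mult_left_mono)
    moreover have "(1 - exp (-1)) * ((1 - exp (-1)) * expected_opt V E p T f) \<ge> ((1 - exp (-1))^2 - \<epsilon>) * expected_opt V E p T f"
      using eps O0 by (simp add: power2_eq_square algebra_simps)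
    ultimately show ?thesis by linarith
qed

theorem theorem2:
  shows "\<forall>\<epsilon>>0. \<exists>\<delta>>0. \<exists>T0::nat. \<forall>(U::'u set) (V::'v set) E p T f x.
     osbm_instance U V E p T f \<and> T \<ge> T0 \<and> real (card U) \<le> \<delta> * sqrt (real T) \<and>
     lp_feasible U V E p T x \<and>
     multilinear_ext E f x \<ge> (1 - exp (-1)) * expected_opt V E p T f
     \<longrightarrow> expected_alg V E p T f x \<ge> ((1 - exp (-1))^2 - \<epsilon>) * expected_opt V E p T f"
proof (intro allI impI)
  fix \<epsilon> :: real assume eps: "\<epsilon> > 0"
  show "\<exists>\<delta>>0. \<exists>T0::nat. \<forall>(U::'u set) (V::'v set) E p T f x.
     osbm_instance U V E p T f \<and> T \<ge> T0 \<and> real (card U) \<le> \<delta> * sqrt (real T) \<and>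
     lp_feasible U V E p T x \<and>
     multilinear_ext E f x \<ge> (1 - exp (-1)) * expected_opt V E p T f
     \<longrightarrow> expected_alg V E p T f x \<ge> ((1 - exp (-1))^2 - \<epsilon>) * expected_opt V E p T f"
    apply (rule exI[of _ "1::real"])
    apply (rule conjI)
     apply simp
    apply (rule exI[of _ "0::nat"])
    using main_thm[OF eps] by blast
qed

end
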